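(* Fix positive integers $r,n,k$ and consider $\mathbb{C}^{rn}$ with a fixed basis indexed by $[r]\times[n]$. Let the torus $T=(\mathbb{C}^* )^n$ act on $\mathbb{C}^{rn}$ by letting $\mathbf{t}=(t_1,\dots,t_n)$ multiply the $(i,j)$-th coordinate by $t_j$, and consider the induced action on the Grassmannian $G(k,rn)$ of $k$-dimensional subspaces of $\mathbb{C}^{rn}$, embedded in $\mathbb{P}(\bigwedge^k\mathbb{C}^{rn})$ by the Plücker embedding. Let $p\in G(k,rn)$ and let $\mathcal{M}$ be the polymatroid associated with $p$. Then the lattice polytope representing the projective toric variety $\overline{Tp}$ is isomorphic to the base polytope of $\mathcal{M}$.
   Context: A polymatroid on a finite set $E$ is given by a rank function $r:\mathcal{P}(E)\to\mathbb{Z}_{\ge0}$ with $r(\emptyset)=0$, $r$ monotone ($Y\subseteq X\Rightarrow r(Y)\le r(X)$) and submodular ($r(X\cup Y)+r(X\cap Y)\le r(X)+r(Y)$). Its base polytope is $\{x\in\mathbb{R}_{\ge0}^E: x\cdot\mathbf{e}_U\le r(U)\ \forall U\subseteq E,\ x\cdot\mathbf{e}_E=r(E)\}$, where $\mathbf{e}_U$ is the indicator vector of $U$. The polymatroid associated with $p$: represent $p$ by a full-rank $k\times rn$ matrix $A$ whose rows span the subspace $p$; for $j\in[n]$ let $W_j\subseteq\mathbb{C}^k$ be the span of the $r$ columns of $A$ indexed by $(i,j)$, $i\in[r]$; then $\mathcal{M}$ is the polymatroid on $[n]$ with rank function $r(S)=\dim\sum_{j\in S}W_j$ (independent of the choice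 of $A$). The lattice polytope representing a projective toric variety given as the closure of a torus orbit parameterised by monomials is the convex hull of the exponent vectors of those monomials. *)

theory Defs
  imports "Jordan_Normal_Form.DL_Rank" "Jordan_Normal_Form.DL_Submatrix" "Jordan_Normal_Form.Determinant"
begin

text \<open>Coordinates of C^(rn) are indexed by pairs (i,j) in [r] x [n]; we encode the
  pair (i,j) (0-based, i < r, j < n) as the column index r*j + i of a k x rn matrix.\<close>
definition col_idx :: "nat \<Rightarrow> nat \<Rightarrow> nat \<Rightarrow> nat" where
  "col_idx r i j = r * j + i"

definition pluecker :: "complex mat \<Rightarrow> nat set \<Rightarrow> complex" where
  "pluecker A J = det (submatrix A UNIV J)"

text \<open>Exponent of t in the torus action on the Pluecker coordinate p_J:
  t multiplies e_J by prod_j t_j^(number of i with (i,j) in J).  Points of R^n are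
  represented as functions nat => real vanishing outside {..<n}.\<close>
definition torus_weight :: "nat \<Rightarrow> nat \<Rightarrow> nat set \<Rightarrow> (nat \<Rightarrow> real)" where
  "torus_weight r n J = (\<lambda>j. if j < n then real (card {i. i < r \<and> col_idx r i j \<in> J}) else 0)"

text \<open>Exponent vectors of the monomials parametrising the orbit closure of p = rowspace A
  in the Pluecker embedding: t \<mapsto> [t^(w(J)) p_J]_J, only nonzero coordinates matter.\<close>
definition orbit_exponents :: "nat \<Rightarrow> nat \<Rightarrow> nat \<Rightarrow> complex mat \<Rightarrow> (nat \<Rightarrow> real) set" where
  "orbit_exponents r n k A =
     {torus_weight r n J | J. J \<subseteq> {..< r * n} \<and> card J = k \<and> pluecker A J \<noteq> 0}"

definition conv_hull :: "nat \<Rightarrow> (nat \<Rightarrow> real) set \<Rightarrow> (nat \<Rightarrow> real) set" where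
  "conv_hull n S = {x. \<exists>P c. finite P \<and> P \<subseteq> S \<and> (\<forall>p\<in>P. c p \<ge> 0) \<and> (\<Sum>p\<in>P. c p) = 1 \<and>
                         x = (\<lambda>j. \<Sum>p\<in>P. c p * p j)}"

definition orbit_polytope :: "nat \<Rightarrow> nat \<Rightarrow> nat \<Rightarrow> complex mat \<Rightarrow> (nat \<Rightarrow> real) set" where
  "orbit_polytope r n k A = conv_hull n (orbit_exponents r n k A)"

text \<open>Rank function of the polymatroid associated with p = rowspace A:
  r(S) = dim (sum_{j in S} W_j), W_j the span of the columns (i,j), i in [r];
  the sum of the W_j is the span of all these columns, i.e. the column space of the
  submatrix formed by them.\<close>
definition pm_rank :: "nat \<Rightarrow> nat \<Rightarrow> complex mat \<Rightarrow> nat set \<Rightarrow> nat" where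
  "pm_rank r k A S = vec_space.rank k (submatrix A UNIV {col_idx r i j | i j. i < r \<and> j \<in> S})"

definition base_polytope :: "nat \<Rightarrow> (nat set \<Rightarrow> nat) \<Rightarrow> (nat \<Rightarrow> real) set" where
  "base_polytope n rk = {x. (\<forall>j. n \<le> j \<longrightarrow> x j = 0) \<and> (\<forall>j<n. 0 \<le> x j) \<and>
      (\<forall>U. U \<subseteq> {..<n} \<longrightarrow> (\<Sum>j\<in>U. x j) \<le> real (rk U)) \<and>
      (\<Sum>j<n. x j) = real (rk {..<n})}"

text \<open>Isomorphism of lattice polytopes in R^n (lattice Z^n): related by an affine
  lattice automorphism x \<mapsto> Lx + b with L in GL_n(Z) and b in Z^n.\<close>
definition lattice_iso :: "nat \<Rightarrow> (nat \<Rightarrow> real) set \<Rightarrow> (nat \<Rightarrow> real) set \<Rightarrow> bool" where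
  "lattice_iso n P Q \<longleftrightarrow> (\<exists>(L::nat \<Rightarrow> nat \<Rightarrow> int) (M::nat \<Rightarrow> nat \<Rightarrow> int) (b::nat \<Rightarrow> int).
      (\<forall>i<n. \<forall>l<n. (\<Sum>j<n. L i j * M j l) = (if i = l then 1 else 0)) \<and>
      (\<forall>i<n. \<forall>l<n. (\<Sum>j<n. M i j * L j l) = (if i = l then 1 else 0)) \<and>
      (\<lambda>x. \<lambda>i. if i < n then (\<Sum>j<n. of_int (L i j) * x j) + of_int (b i) else 0) ` P = Q)"

end

theory Submission
  imports Defs "Jordan_Normal_Form.DL_Rank_Submatrix"
begin


lemma cvx_point: "p \<in> S \<Longrightarrow> p \<in> conv_hull m S"
  unfolding conv_hull_def
  by (rule CollectI, rule exI[of _ "{p}"], rule exI[of _ "\<lambda>_. 1"]) auto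

lemma cvx_mono: "S \<subseteq> T \<Longrightarrow> conv_hull m S \<subseteq> conv_hull m' T"
  unfolding conv_hull_def by blast

lemma sum_restr_aux:
  assumes "finite P" "finite Q"
  shows "(\<Sum>p\<in>P\<union>Q. (if p\<in>P then c p else 0) * g p) = (\<Sum>p\<in>P. c p * (g p::real))"
proof -
  have "(\<Sum>p\<in>P\<union>Q. (if p\<in>P then c p else 0) * g p) = (\<Sum>p\<in>P\<union>Q. (if p\<in>P then c p * g p else 0))"
    by (rule sum.cong) auto
  also have "\<dots> = (\<Sum>p\<in>(P\<union>Q) \<inter> P. c p * g p)"
    using assms by (subst sum.inter_restrict) auto
  also have "(P\<union>Q) \<inter> P = P" by blast
  finally show ?thesis .
qed

lemma cvx_bin:
  assumes "x \<in> conv_hull m S" "y \<in> conv_hull m S" "0 \<le> t" "t \<le> 1"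
  shows "(\<lambda>j. t * x j + (1 - t) * y j) \<in> conv_hull m S"
proof -
  obtain P c where P: "finite P" "P \<subseteq> S" "\<forall>p\<in>P. c p \<ge> 0" "sum c P = 1" "x = (\<lambda>j. \<Sum>p\<in>P. c p * p j)"
    using assms(1) unfolding conv_hull_def by blast
  obtain Q d where Q: "finite Q" "Q \<subseteq> S" "\<forall>p\<in>Q. d p \<ge> 0" "sum d Q = 1" "y = (\<lambda>j. \<Sum>p\<in>Q. d p * p j)"
    using assms(2) unfolding conv_hull_def by blast
  define e where "e p = t * (if p \<in> P then c p else 0) + (1-t) * (if p \<in> Q then d p else 0)" for p
  have e1: "(\<Sum>p\<in>P\<union>Q. e p * g p) = t * (\<Sum>p\<in>P. c p * g p) + (1 - t) * (\<Sum>p\<in>Q. d p * g p)" for g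
  proof -
    have "(\<lambda>p. e p * g p) = (\<lambda>p. t * ((if p\<in>P then c p else 0) * g p) + (1-t) * ((if p\<in>Q then d p else 0) * g p))"
      unfolding e_def by (auto simp: algebra_simps)
    then have "(\<Sum>p\<in>P\<union>Q. e p * g p) = t * (\<Sum>p\<in>P\<union>Q. (if p\<in>P then c p else 0) * g p)
         + (1 - t) * (\<Sum>p\<in>Q\<union>P. (if p\<in>Q then d p else 0) * g p)"
      by (simp only: sum.distrib sum_distrib_left[symmetric] Un_commute)
    then show ?thesis using sum_restr_aux[OF P(1) Q(1)] sum_restr_aux[OF Q(1) P(1)] by simp
  qed
  show ?thesis
    unfolding conv_hull_def
  proof (rule CollectI, rule exI[of _ "P \<union> Q"], rule exI[of _ e], intro conjI)
    show "finite (P \<union> Q)" using P Q by auto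
    show "P \<union> Q \<subseteq> S" using P Q by auto
    show "\<forall>p\<in>P \<union> Q. 0 \<le> e p" using P Q assms(3,4) unfolding e_def by auto
    show "sum e (P \<union> Q) = 1" using e1[of "\<lambda>_. 1"] P Q by simp
    show "(\<lambda>j. t * x j + (1 - t) * y j) = (\<lambda>j. \<Sum>p\<in>P \<union> Q. e p * p j)"
      using e1 P Q by auto
  qed
qed

lemma cvx_comb:
  assumes "finite I" "\<forall>i\<in>I. v i \<in> conv_hull m S" "\<forall>i\<in>I. 0 \<le> c i" "sum c I = 1"
  shows "(\<lambda>j. \<Sum>i\<in>I. c i * v i j) \<in> conv_hull m S"
  using assms
proof (induction I arbitrary: c rule: finite_induct)
  case empty
  then show ?case by simp
next
  case (insert i I)
  have ci: "c i + sum c I = 1" using insert by simp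
  have sI: "sum c I \<ge> 0" using insert by (simp add: sum_nonneg)
  show ?case
  proof (cases "c i = 1")
    case True
    then have "sum c I = 0" using ci by simp
    then have z: "\<forall>i'\<in>I. c i' = 0" using insert sum_nonneg_eq_0_iff by (metis insert_iff)
    have "(\<lambda>j. \<Sum>i\<in>insert i I. c i * v i j) = v i"
      using insert True z by auto
    then show ?thesis using insert by simp
  next
    case False
    define s where "s = sum c I"
    have spos: "s > 0" using False ci sI unfolding s_def by auto
    define y where "y = (\<lambda>j. \<Sum>i'\<in>I. (c i' / s) * v i' j)"
    have "y \<in> conv_hull m S"
      unfolding y_def
    proof (rule insert.IH)
      show "\<forall>i\<in>I. v i \<in> conv_hull m S" "\<forall>ia\<in>I. 0 \<le> c ia / s" using insert spos by auto
      show "(\<Sum>i\<in>I. c i / s) = 1" using spos unfolding s_def by (simp add: sum_divide_distrib[symmetric])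
    qed
    moreover have "v i \<in> conv_hull m S" using insert by simp
    moreover have "0 \<le> c i" "c i \<le> 1" using insert sI ci by auto
    ultimately have "(\<lambda>j. c i * v i j + (1 - c i) * y j) \<in> conv_hull m S" by (intro cvx_bin)
    moreover have "(\<lambda>j. c i * v i j + (1 - c i) * y j) = (\<lambda>j. \<Sum>i\<in>insert i I. c i * v i j)"
    proof
      fix j
      have "(1 - c i) * y j = s * (\<Sum>i'\<in>I. (c i' / s) * v i' j)" using ci unfolding y_def s_def by simp
      also have "\<dots> = (\<Sum>i'\<in>I. c i' * v i' j)" using spos by (simp add: sum_distrib_left)
      finally show "c i * v i j + (1 - c i) * y j = (\<Sum>i\<in>insert i I. c i * v i j)" using insert by simp
    qed
    ultimately show ?thesis by simp
  qed
qed

lemma cvx_plus: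
  assumes "x \<in> conv_hull m S1" "y \<in> conv_hull m S2" "\<forall>p\<in>S1. \<forall>q\<in>S2. (\<lambda>j. p j + q j) \<in> S3"
  shows "(\<lambda>j. x j + y j) \<in> conv_hull m S3"
proof -
  obtain P c where P: "finite P" "P \<subseteq> S1" "\<forall>p\<in>P. c p \<ge> 0" "sum c P = 1" "x = (\<lambda>j. \<Sum>p\<in>P. c p * p j)"
    using assms(1) unfolding conv_hull_def by blast
  obtain Q d where Q: "finite Q" "Q \<subseteq> S2" "\<forall>p\<in>Q. d p \<ge> 0" "sum d Q = 1" "y = (\<lambda>j. \<Sum>p\<in>Q. d p * p j)"
    using assms(2) unfolding conv_hull_def by blast
  have z: "(\<lambda>j. x j + q j) \<in> conv_hull m S3" if q: "q \<in> Q" for q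
  proof -
    have "\<forall>p\<in>P. (\<lambda>j. p j + q j) \<in> S3" using P(2) Q(2) q assms(3) by blast
    then have "(\<lambda>j. \<Sum>p\<in>P. c p * (\<lambda>j. p j + q j) j) \<in> conv_hull m S3"
      using P by (intro cvx_comb) (auto intro!: cvx_point)
    moreover have "(\<lambda>j. \<Sum>p\<in>P. c p * (\<lambda>j. p j + q j) j) = (\<lambda>j. x j + q j)"
      using P by (auto simp: algebra_simps sum.distrib sum_distrib_right[symmetric])
    ultimately show ?thesis by simp
  qed
  have "(\<lambda>j. \<Sum>q\<in>Q. d q * (\<lambda>j. x j + q j) j) \<in> conv_hull m S3"
    using Q z by (intro cvx_comb) auto
  moreover have "(\<lambda>j. \<Sum>q\<in>Q. d q * (\<lambda>j. x j + q j) j) = (\<lambda>j. x j + y j)"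
    using Q by (auto simp: algebra_simps sum.distrib sum_distrib_right[symmetric])
  ultimately show ?thesis by simp
qed



definition gv :: "(nat set \<Rightarrow> real) \<Rightarrow> nat list \<Rightarrow> nat \<Rightarrow> real" where
  "gv f p a = (if a \<in> set p then f (insert a (set (takeWhile (\<lambda>b. b \<noteq> a) p)))
                 - f (set (takeWhile (\<lambda>b. b \<noteq> a) p)) else 0)"

definition inB :: "nat set \<Rightarrow> (nat set \<Rightarrow> real) \<Rightarrow> (nat \<Rightarrow> real) \<Rightarrow> bool" where
  "inB E f x \<longleftrightarrow> (\<forall>j. j \<notin> E \<longrightarrow> x j = 0) \<and> (\<forall>U. U \<subseteq> E \<longrightarrow> sum x U \<le> f U) \<and> sum x E = f E"

definition GV :: "nat set \<Rightarrow> (nat set \<Rightarrow> real) \<Rightarrow> (nat \<Rightarrow> real) set" where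
  "GV E f = {gv f p | p. distinct p \<and> set p = E}"

lemma gv_append:
  assumes "distinct (xs @ ys)"
  shows "gv f (xs @ ys) a = gv f xs a + gv (\<lambda>S. f (S \<union> set xs) - f (set xs)) ys a"
proof (cases "a \<in> set xs")
  case True
  then have "a \<notin> set ys" using assms by auto
  moreover have "takeWhile (\<lambda>b. b \<noteq> a) (xs @ ys) = takeWhile (\<lambda>b. b \<noteq> a) xs"
    using True by (simp add: takeWhile_append1)
  ultimately show ?thesis using True unfolding gv_def by simp
next
  case False
  note F = False
  show ?thesis
  proof (cases "a \<in> set ys")
    case True
    have tw: "takeWhile (\<lambda>b. b \<noteq> a) (xs @ ys) = xs @ takeWhile (\<lambda>b. b \<noteq> a) ys"
      using F by (intro takeWhile_append2) auto
    show ?thesis using True F unfolding gv_def tw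
      by (simp add: Un_commute insert_commute)
  next
    case False
    then show ?thesis using F unfolding gv_def by simp
  qed
qed



lemma abs_main:
  assumes "finite E" "f {} = 0" "inB E f x"
  shows "x \<in> conv_hull 0 (GV E f)"
  using assms
proof (induction "card E" arbitrary: E f x rule: less_induct)
  case less
  have tight: "x' \<in> conv_hull 0 (GV E f)"
    if x': "inB E f x'" and T: "T \<noteq> {}" "T \<subset> E" "sum x' T = f T" for x' T
  proof -
    define x1 where "x1 = (\<lambda>j. if j \<in> T then x' j else 0)"
    define x2 where "x2 = (\<lambda>j. if j \<in> E - T then x' j else 0)"
    define f2 where "f2 = (\<lambda>S. f (S \<union> T) - f T)"
    have finT: "finite T" using T less.prems(1) finite_subset by blast
    have x'0: "\<And>j. j \<notin> E \<Longrightarrow> x' j = 0" and x'U: "\<And>U. U \<subseteq> E \<Longrightarrow> sum x' U \<le> f U"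
      and x'E: "sum x' E = f E" using x' unfolding inB_def by auto
    have s1: "sum x1 U = sum x' U" if "U \<subseteq> T" for U
      unfolding x1_def using that by (intro sum.cong) auto
    have s2: "sum x2 U = sum x' U" if "U \<subseteq> E - T" for U
      unfolding x2_def using that by (intro sum.cong) auto
    have B1: "inB T f x1"
      unfolding inB_def using s1 T x'U by (auto simp: x1_def)
    have B2: "inB (E - T) f2 x2"
      unfolding inB_def
    proof (intro conjI allI impI)
      fix j assume "j \<notin> E - T" then show "x2 j = 0" unfolding x2_def by (rule if_not_P)
    next
      fix U assume U: "U \<subseteq> E - T"
      have finU: "finite U" using U less.prems(1) finite_subset by blast
      have "sum x' (U \<union> T) = sum x' U + sum x' T"
        using U finU finT by (intro sum.union_disjoint) auto
      moreover have "sum x' (U \<union> T) \<le> f (U \<union> T)" using U T by (intro x'U) auto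
      ultimately show "sum x2 U \<le> f2 U" using s2[OF U] T unfolding f2_def by simp
    next
      have "sum x' E = sum x' (E - T) + sum x' T"
        using T less.prems(1) by (intro sum.subset_diff) auto
      moreover have "(E - T) \<union> T = E" using T by blast
      ultimately show "sum x2 (E - T) = f2 (E - T)" using s2[of "E - T"] x'E T unfolding f2_def by simp
    qed
    have c1: "card T < card E" using T less.prems(1) by (simp add: psubset_card_mono)
    have "E - T \<subset> E" using T by blast
    then have c2: "card (E - T) < card E" using less.prems(1) by (intro psubset_card_mono) auto
    have IH1: "x1 \<in> conv_hull 0 (GV T f)"
      using less.hyps[OF c1 finT less.prems(2) B1] .
    have IH2: "x2 \<in> conv_hull 0 (GV (E - T) f2)"
      using less.hyps[OF c2 _ _ B2] less.prems(1) unfolding f2_def by simp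
    have comb: "\<forall>p\<in>GV T f. \<forall>q\<in>GV (E - T) f2. (\<lambda>j. p j + q j) \<in> GV E f"
    proof (intro ballI)
      fix p q assume p: "p \<in> GV T f" and q: "q \<in> GV (E - T) f2"
      obtain xs where xs: "p = gv f xs" "distinct xs" "set xs = T" using p unfolding GV_def by blast
      obtain ys where ys: "q = gv f2 ys" "distinct ys" "set ys = E - T" using q unfolding GV_def by blast
      have d: "distinct (xs @ ys)" using xs ys by auto
      have "(\<lambda>j. p j + q j) = gv f (xs @ ys)"
        using gv_append[OF d, of f] xs ys unfolding f2_def by auto
      moreover have "set (xs @ ys) = E" using xs ys T by auto
      ultimately show "(\<lambda>j. p j + q j) \<in> GV E f" using d unfolding GV_def by blast
    qed
    have "(\<lambda>j. x1 j + x2 j) \<in> conv_hull 0 (GV E f)"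
      by (rule cvx_plus[OF IH1 IH2 comb])
    moreover have "(\<lambda>j. x1 j + x2 j) = x'"
      using x'0 T unfolding x1_def x2_def by auto
    ultimately show ?thesis by simp
  qed
  show ?case
  proof (cases "\<exists>T. T \<noteq> {} \<and> T \<subset> E \<and> sum x T = f T")
    case True
    then show ?thesis using tight less.prems(3) by blast
  next
    case noT: False
    have x0: "\<And>j. j \<notin> E \<Longrightarrow> x j = 0" and xU: "\<And>U. U \<subseteq> E \<Longrightarrow> sum x U \<le> f U"
      and xE: "sum x E = f E" using less.prems(3) unfolding inB_def by auto
    show ?thesis
    proof (cases "E = {}")
      case True
      then have "x = gv f []" using x0 by (auto simp: gv_def)
      then have "x \<in> GV E f" using True unfolding GV_def by force
      then show ?thesis by (rule cvx_point)
    next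
      case nE: False
      then obtain a where a: "a \<in> E" by blast
      show ?thesis
      proof (cases "E = {a}")
        case True
        have "x = gv f [a]"
        proof
          fix j show "x j = gv f [a] j"
            using x0 xE True less.prems(2) by (cases "j = a") (auto simp: gv_def)
        qed
        then have "x \<in> GV E f" using True unfolding GV_def by force
        then show ?thesis by (rule cvx_point)
      next
        case False
        then obtain b where b: "b \<in> E" "b \<noteq> a" using a by blast
        define D1 where "D1 = {U. U \<subseteq> E \<and> a \<in> U \<and> b \<notin> U}"
        define D2 where "D2 = {U. U \<subseteq> E \<and> b \<in> U \<and> a \<notin> U}"
        have finD: "finite D1" "finite D2" unfolding D1_def D2_def using less.prems(1) by auto
        have neD: "{a} \<in> D1" "{b} \<in> D2" unfolding D1_def D2_def using a b by auto
        have slack: "sum x U < f U" if "U \<in> D1 \<or> U \<in> D2" for U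
        proof -
          have "U \<noteq> {}" "U \<subset> E" using that a b unfolding D1_def D2_def by auto
          moreover have "\<not> (U \<noteq> {} \<and> U \<subset> E \<and> sum x U = f U)" using noT by blast
          ultimately have "sum x U \<noteq> f U" by blast
          moreover have "sum x U \<le> f U" using that xU unfolding D1_def D2_def by auto
          ultimately show ?thesis by simp
        qed
        define t1 where "t1 = Min ((\<lambda>U. f U - sum x U) ` D1)"
        define t2 where "t2 = Min ((\<lambda>U. f U - sum x U) ` D2)"
        have "t1 \<in> (\<lambda>U. f U - sum x U) ` D1"
          unfolding t1_def using finD neD by (intro Min_in) auto
        then obtain U1 where U1: "U1 \<in> D1" "t1 = f U1 - sum x U1" by blast
        have "t2 \<in> (\<lambda>U. f U - sum x U) ` D2"
          unfolding t2_def using finD neD by (intro Min_in) auto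
        then obtain U2 where U2: "U2 \<in> D2" "t2 = f U2 - sum x U2" by blast
        have t1le: "t1 \<le> f U - sum x U" if "U \<in> D1" for U
          unfolding t1_def using finD that by (intro Min_le) auto
        have t2le: "t2 \<le> f U - sum x U" if "U \<in> D2" for U
          unfolding t2_def using finD that by (intro Min_le) auto
        have t1pos: "t1 > 0" using U1 slack by auto
        have t2pos: "t2 > 0" using U2 slack by auto
        define d where "d = (\<lambda>j. (if j = a then 1 else 0) - (if j = b then 1 else (0::real)))"
        have sd: "sum d U = (if a \<in> U then 1 else 0) - (if b \<in> U then 1 else 0)" if "U \<subseteq> E" for U
        proof -
          have "finite U" using that less.prems(1) finite_subset by blast
          then show ?thesis unfolding d_def by (simp add: sum_subtractf)
        qed
        have sx: "sum (\<lambda>j. x j + t * d j) U = sum x U + t * sum d U" for t U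
          by (simp add: sum.distrib sum_distrib_left)
        define x1 where "x1 = (\<lambda>j. x j + t1 * d j)"
        define x2 where "x2 = (\<lambda>j. x j + (- t2) * d j)"
        have sx1: "sum x1 U = sum x U + t1 * sum d U" for U
          unfolding x1_def by (simp add: sum.distrib sum_distrib_left)
        have sx2: "sum x2 U = sum x U - t2 * sum d U" for U
          unfolding x2_def by (simp add: sum_subtractf sum_distrib_left)
        have B1: "inB E f x1"
          unfolding inB_def
        proof (intro conjI allI impI)
          fix j assume "j \<notin> E" then show "x1 j = 0" using x0 a b unfolding x1_def d_def by auto
        next
          fix U assume U: "U \<subseteq> E"
          show "sum x1 U \<le> f U"
          proof (cases "a \<in> U \<and> b \<notin> U")
            case True
            then have "U \<in> D1" using U unfolding D1_def by auto
            then have "t1 \<le> f U - sum x U" by (rule t1le)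
            then show ?thesis using sx1 sd[OF U] True by auto
          next
            case False
            then show ?thesis using sx1 sd[OF U] xU[OF U] t1pos by auto
          qed
        next
          show "sum x1 E = f E" using sx1 sd[of E] xE a b by auto
        qed
        have B2: "inB E f x2"
          unfolding inB_def
        proof (intro conjI allI impI)
          fix j assume "j \<notin> E" then show "x2 j = 0" using x0 a b unfolding x2_def d_def by auto
        next
          fix U assume U: "U \<subseteq> E"
          show "sum x2 U \<le> f U"
          proof (cases "b \<in> U \<and> a \<notin> U")
            case True
            then have "U \<in> D2" using U unfolding D2_def by auto
            then have "t2 \<le> f U - sum x U" by (rule t2le)
            then show ?thesis using sx2 sd[OF U] True by auto
          next
            case False
            then show ?thesis using sx2 sd[OF U] xU[OF U] t2pos by auto
          qed
        next
          show "sum x2 E = f E" using sx2 sd[of E] xE a b by auto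
        qed
        have T1: "sum x1 U1 = f U1" using U1 sx1 sd[of U1] unfolding D1_def by auto
        have T2: "sum x2 U2 = f U2" using U2 sx2 sd[of U2] unfolding D2_def by auto
        have C1: "x1 \<in> conv_hull 0 (GV E f)"
          using tight[OF B1 _ _ T1] U1 b unfolding D1_def by auto
        have C2: "x2 \<in> conv_hull 0 (GV E f)"
          using tight[OF B2 _ _ T2] U2 a b unfolding D2_def by auto
        define s where "s = t2 / (t1 + t2)"
        have "(\<lambda>j. s * x1 j + (1 - s) * x2 j) \<in> conv_hull 0 (GV E f)"
          using t1pos t2pos unfolding s_def by (intro cvx_bin[OF C1 C2]) auto
        moreover have "(\<lambda>j. s * x1 j + (1 - s) * x2 j) = x"
        proof
          fix j
          have ne: "t1 + t2 \<noteq> 0" using t1pos t2pos by simp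
          have "1 - s = t1 / (t1 + t2)" unfolding s_def using ne by (simp add: field_simps)
          then have "s * x1 j + (1 - s) * x2 j = t2 / (t1 + t2) * x1 j + t1 / (t1 + t2) * x2 j"
            unfolding s_def by simp
          also have "\<dots> = (t2 * x1 j + t1 * x2 j) / (t1 + t2)"
            by (simp add: add_divide_distrib)
          finally have "s * x1 j + (1 - s) * x2 j = (t2 * x1 j + t1 * x2 j) / (t1 + t2)" .
          also have "\<dots> = x j" using t1pos t2pos unfolding x1_def x2_def by (simp add: field_simps)
          finally show "s * x1 j + (1 - s) * x2 j = x j" .
        qed
        ultimately show ?thesis by simp
      qed
    qed
  qed
qed



context vec_space
begin

lemma la_card_le:
  assumes "finite S" "S \<subseteq> carrier_vec n" "U \<subseteq> S" "lin_indpt U"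
  shows "card U \<le> vectorspace.dim class_ring (span_vs S)"
proof -
  obtain U' where U': "finite U'" "maximal U' (\<lambda>T. T \<subseteq> S \<and> lin_indpt T)" "U \<subseteq> U'"
    using maximal_exists_superset[of S "\<lambda>T. T \<subseteq> S \<and> lin_indpt T" U] assms by blast
  have "vectorspace.dim class_ring (span_vs S) = card U'"
    using dim_span[OF assms(2) assms(1) U'(2)] .
  then show ?thesis using U' card_mono by metis
qed

lemma la_extend:
  assumes "finite S" "S \<subseteq> carrier_vec n" "U \<subseteq> S" "lin_indpt U"
  shows "\<exists>U'. U \<subseteq> U' \<and> U' \<subseteq> S \<and> lin_indpt U' \<and> card U' = vectorspace.dim class_ring (span_vs S)"
proof -
  obtain U' where U': "finite U'" "maximal U' (\<lambda>T. T \<subseteq> S \<and> lin_indpt T)" "U \<subseteq> U'"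
    using maximal_exists_superset[of S "\<lambda>T. T \<subseteq> S \<and> lin_indpt T" U] assms by blast
  have "vectorspace.dim class_ring (span_vs S) = card U'"
    using dim_span[OF assms(2) assms(1) U'(2)] .
  then show ?thesis using U' unfolding maximal_def by metis
qed

lemma la_dim_empty: "vectorspace.dim class_ring (span_vs {}) = 0"
  by (rule dim_zero_vs)

end

lemma pick_bij:
  fixes C :: "nat set" and N :: nat
  defines "D \<equiv> {a. a < N \<and> a \<in> C}"
  shows "bij_betw (pick C) {..<card D} D"
proof -
  have finD: "finite D" unfolding D_def by auto
  have cond: "j < card C \<or> infinite C" if "j < card D" for j
  proof (cases "finite C")
    case True
    then have "card D \<le> card C" unfolding D_def by (intro card_mono) auto
    then show ?thesis using that by auto
  qed auto
  show ?thesis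
    unfolding bij_betw_def
  proof (intro conjI)
    show "inj_on (pick C) {..<card D}"
      unfolding inj_on_def
      by (metis cond lessThan_iff nat_neq_iff pick_mono)
    show "pick C ` {..<card D} = D"
    proof
      show "pick C ` {..<card D} \<subseteq> D"
        using cond pick_in_set pick_le unfolding D_def by auto
      show "D \<subseteq> pick C ` {..<card D}"
      proof
        fix i assume i: "i \<in> D"
        have "{a\<in>C. a < i} \<subset> D" using i unfolding D_def by auto
        then have "card {a\<in>C. a < i} < card D" by (rule psubset_card_mono[OF finD])
        moreover have "pick C (card {a\<in>C. a < i}) = i" using i unfolding D_def by (intro pick_card_in_set) auto
        ultimately show "i \<in> pick C ` {..<card D}" by force
      qed
    qed
  qed
qed

lemma cols_sub_nth:
  assumes "j < card {a. a < dim_col A \<and> a \<in> C}"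
  shows "cols (submatrix A UNIV C) ! j = col A (pick C j)"
proof -
  have j: "j < dim_col (submatrix A UNIV C)" using assms by (simp add: dim_submatrix)
  show ?thesis
    unfolding cols_nth[OF j]
  proof (rule eq_vecI)
    show "dim_vec (col (submatrix A UNIV C) j) = dim_vec (col A (pick C j))"
      by (simp add: dim_submatrix)
    fix i assume "i < dim_vec (col A (pick C j))"
    then have i: "i < dim_row A" by simp
    then have i2: "i < card {i. i < dim_row A \<and> i \<in> UNIV}" by simp
    have i3: "i < dim_row (submatrix A UNIV C)" using i by (simp add: dim_submatrix)
    show "col (submatrix A UNIV C) j $ i = col A (pick C j) $ i"
      unfolding col_def index_vec[OF i3] index_vec[OF i]
      using submatrix_index[OF i2 assms] pick_UNIV by simp
  qed
qed

lemma col_sub: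
  assumes "j < card {a. a < dim_col A \<and> a \<in> C}"
  shows "col (submatrix A UNIV C) j = col A (pick C j)"
proof -
  have j: "j < dim_col (submatrix A UNIV C)" using assms by (simp add: dim_submatrix)
  show ?thesis using cols_sub_nth[OF assms] cols_nth[OF j] by simp
qed

lemma cols_sub_map:
  "cols (submatrix A UNIV C) = map (\<lambda>j. col A (pick C j)) [0..<card {a. a < dim_col A \<and> a \<in> C}]"
  by (rule nth_equalityI) (auto simp: dim_submatrix col_sub)

lemma set_cols_sub: "set (cols (submatrix A UNIV C)) = col A ` {a. a < dim_col A \<and> a \<in> C}"
proof -
  have "set (cols (submatrix A UNIV C)) = (col A \<circ> pick C) ` {..<card {a. a < dim_col A \<and> a \<in> C}}"
    unfolding cols_sub_map by (auto simp: atLeast0LessThan)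
  also have "\<dots> = col A ` {a. a < dim_col A \<and> a \<in> C}"
    using pick_bij[of C "dim_col A"] unfolding bij_betw_def by (metis image_comp)
  finally show ?thesis .
qed

lemma distinct_cols_sub:
  "distinct (cols (submatrix A UNIV C)) \<longleftrightarrow> inj_on (col A) {a. a < dim_col A \<and> a \<in> C}"
proof -
  have b: "bij_betw (pick C) {..<card {a. a < dim_col A \<and> a \<in> C}} {a. a < dim_col A \<and> a \<in> C}"
    using pick_bij[of C "dim_col A"] by simp
  have "distinct (cols (submatrix A UNIV C)) \<longleftrightarrow> inj_on (\<lambda>j. col A (pick C j)) {0..<card {a. a < dim_col A \<and> a \<in> C}}"
    unfolding cols_sub_map distinct_map by simp
  also have "\<dots> \<longleftrightarrow> inj_on (col A \<circ> pick C) {..<card {a. a < dim_col A \<and> a \<in> C}}"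
    by (simp add: atLeast0LessThan comp_def)
  also have "\<dots> \<longleftrightarrow> inj_on (col A) (pick C ` {..<card {a. a < dim_col A \<and> a \<in> C}})"
    using b unfolding bij_betw_def by (intro comp_inj_on_iff[symmetric]) simp
  also have "pick C ` {..<card {a. a < dim_col A \<and> a \<in> C}} = {a. a < dim_col A \<and> a \<in> C}"
    using b unfolding bij_betw_def by simp
  finally show ?thesis .
qed



definition blk :: "nat \<Rightarrow> nat set \<Rightarrow> nat set" where
  "blk r S = {col_idx r i j | i j. i < r \<and> j \<in> S}"

definition cnt :: "nat \<Rightarrow> nat set \<Rightarrow> nat \<Rightarrow> nat" where
  "cnt r J a = card {i. i < r \<and> col_idx r i a \<in> J}"

lemma col_idx_inj:
  assumes "0 < r" "i < r" "i' < r" "col_idx r i j = col_idx r i' j'"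
  shows "i = i' \<and> j = j'"
proof -
  have "(r * j + i) div r = j" "(r * j' + i') div r = j'" using assms by simp_all
  then have "j = j'" using assms(4) unfolding col_idx_def by metis
  then show ?thesis using assms(4) unfolding col_idx_def by simp
qed

lemma blk_insert: "blk r (insert a S) = blk r {a} \<union> blk r S"
  unfolding blk_def by blast

lemma blk_disj: assumes "0 < r" "a \<notin> S" shows "blk r {a} \<inter> blk r S = {}"
  using assms col_idx_inj unfolding blk_def by blast

lemma blk_lessThan: assumes "0 < r" shows "blk r {..<n} = {..<r*n}"
proof
  show "blk r {..<n} \<subseteq> {..<r*n}"
  proof
    fix m assume "m \<in> blk r {..<n}"
    then obtain i j where "m = r * j + i" "i < r" "j < n" unfolding blk_def col_idx_def by blast
    moreover have "r * j + i < r * (j + 1)" using \<open>i < r\<close> by simp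
    moreover have "r * (j + 1) \<le> r * n" using \<open>j < n\<close> by (intro mult_left_mono) auto
    ultimately show "m \<in> {..<r*n}" by simp
  qed
  show "{..<r*n} \<subseteq> blk r {..<n}"
  proof
    fix m assume m: "m \<in> {..<r*n}"
    have "m = r * (m div r) + m mod r" by simp
    moreover have "m mod r < r" using assms by simp
    moreover have "m div r < n" using m assms by (simp add: div_less_iff_less_mult mult.commute)
    ultimately show "m \<in> blk r {..<n}" unfolding blk_def col_idx_def by blast
  qed
qed

lemma blk_finite: "finite S \<Longrightarrow> finite (blk r S)"
proof -
  assume "finite S"
  have "blk r S = (\<lambda>(i, j). col_idx r i j) ` ({..<r} \<times> S)" unfolding blk_def by auto
  then show ?thesis using \<open>finite S\<close> by simp
qed

lemma cnt_eq: assumes "0 < r" shows "cnt r J a = card (J \<inter> blk r {a})"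
proof -
  have "J \<inter> blk r {a} = (\<lambda>i. col_idx r i a) ` {i. i < r \<and> col_idx r i a \<in> J}"
    unfolding blk_def by auto
  moreover have "inj_on (\<lambda>i. col_idx r i a) {i. i < r \<and> col_idx r i a \<in> J}"
    unfolding inj_on_def col_idx_def by auto
  ultimately show ?thesis unfolding cnt_def by (simp add: card_image)
qed

lemma card_blk_sum:
  assumes "0 < r" "finite U"
  shows "card (J \<inter> blk r U) = (\<Sum>a\<in>U. cnt r J a)"
  using assms(2)
proof (induction U rule: finite_induct)
  case empty
  then show ?case unfolding blk_def by simp
next
  case (insert a U)
  have "J \<inter> blk r (insert a U) = (J \<inter> blk r {a}) \<union> (J \<inter> blk r U)"
    using blk_insert by blast
  moreover have "(J \<inter> blk r {a}) \<inter> (J \<inter> blk r U) = {}" using blk_disj[OF assms(1) insert(2)] by blast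
  moreover have "finite (J \<inter> blk r {a})" "finite (J \<inter> blk r U)" using blk_finite insert by auto
  ultimately have "card (J \<inter> blk r (insert a U)) = card (J \<inter> blk r {a}) + card (J \<inter> blk r U)"
    by (simp add: card_Un_disjoint)
  then show ?case using insert cnt_eq[OF assms(1)] by simp
qed

locale pm_setup =
  fixes r n k :: nat and A :: "complex mat"
  assumes rpos: "0 < r" and Acar: "A \<in> carrier_mat k (r * n)"
begin

sublocale vec_space "TYPE(complex)" k .

definition ind :: "nat set \<Rightarrow> bool" where
  "ind J \<longleftrightarrow> J \<subseteq> {..<r*n} \<and> inj_on (col A) J \<and> lin_indpt (col A ` J)"

definition rkv :: "nat set \<Rightarrow> nat" where
  "rkv C = vectorspace.dim class_ring (span_vs (col A ` (C \<inter> {..<r*n})))"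

lemma dimA: "dim_row A = k" "dim_col A = r * n" using Acar by auto

lemma colcar: "col A ` X \<subseteq> carrier_vec k"
  using col_dim[of A] dimA by auto

lemma pm_rank_eq: "pm_rank r k A S = rkv (blk r S)"
proof -
  have e: "{a. a < dim_col A \<and> a \<in> blk r S} = blk r S \<inter> {..<r*n}" using dimA by auto
  have "pm_rank r k A S = vectorspace.dim class_ring (span_vs (set (cols (submatrix A UNIV (blk r S)))))"
    unfolding pm_rank_def rank_def blk_def ..
  then show ?thesis by (simp only: set_cols_sub e rkv_def)
qed

lemma rank_A: "rank A = rkv {..<r*n}"
proof -
  have "set (cols A) = col A ` {..<r*n}" unfolding cols_def using dimA by (simp add: atLeast0LessThan)
  then show ?thesis unfolding rank_def rkv_def by simp
qed

lemma rkv_empty: "rkv {} = 0"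
  unfolding rkv_def using la_dim_empty by simp

lemma ind_card_le:
  assumes "ind J" "J \<subseteq> C"
  shows "card J \<le> rkv C"
proof -
  have "card J = card (col A ` J)" using assms(1) unfolding ind_def by (simp add: card_image)
  also have "\<dots> \<le> rkv C"
    unfolding rkv_def
    using assms colcar unfolding ind_def by (intro la_card_le) auto
  finally show ?thesis .
qed

lemma ind_subset: assumes "ind J" "J' \<subseteq> J" shows "ind J'"
proof -
  have "col A ` J' \<subseteq> col A ` J" using assms(2) by (rule image_mono)
  then have "lin_indpt (col A ` J')" using assms(1) subset_li_is_li unfolding ind_def by blast
  moreover have "inj_on (col A) J'" using assms inj_on_subset unfolding ind_def by blast
  ultimately show ?thesis using assms unfolding ind_def by blast
qed

lemma ind_empty: "ind {}"
  unfolding ind_def by (simp add: lin_dep_def)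

lemma ind_extend:
  assumes "ind J" "J \<subseteq> C1" "card J = rkv C1" "C1 \<subseteq> C2"
  shows "\<exists>New. New \<subseteq> (C2 - C1) \<inter> {..<r*n} \<and> ind (J \<union> New) \<and> card (J \<union> New) = rkv C2"
proof -
  define U where "U = col A ` J"
  define S where "S = col A ` (C2 \<inter> {..<r*n})"
  have JN: "J \<subseteq> {..<r*n}" "inj_on (col A) J" "lin_indpt U" using assms(1) unfolding ind_def U_def by auto
  have finS: "finite S" unfolding S_def by simp
  have US: "U \<subseteq> S" unfolding U_def S_def using JN assms by auto
  obtain U' where U': "U \<subseteq> U'" "U' \<subseteq> S" "lin_indpt U'" "card U' = rkv C2"
    using la_extend[OF finS _ US JN(3)] colcar unfolding S_def rkv_def by (auto simp: S_def)
  have cardU: "card U = card J" unfolding U_def using JN by (simp add: card_image)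
  have new: "\<exists>j. j \<in> (C2 - C1) \<inter> {..<r*n} \<and> col A j = u" if u: "u \<in> U' - U" for u
  proof -
    obtain j where j: "j \<in> C2 \<inter> {..<r*n}" "col A j = u" using u U' unfolding S_def by auto
    have "u \<notin> col A ` (C1 \<inter> {..<r*n})"
    proof
      assume uin: "u \<in> col A ` (C1 \<inter> {..<r*n})"
      have "insert u U \<subseteq> col A ` (C1 \<inter> {..<r*n})" using uin assms(2) JN unfolding U_def by auto
      moreover have "lin_indpt (insert u U)" using U' u subset_li_is_li[of U' "insert u U"] by auto
      ultimately have "card (insert u U) \<le> rkv C1"
        unfolding rkv_def using colcar by (intro la_card_le) auto
      moreover have "card (insert u U) = card U + 1"
      proof -
        have "finite U" using US finS finite_subset by blast
        then show ?thesis using u by simp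
      qed
      ultimately show False using cardU assms(3) by simp
    qed
    then show ?thesis using j by blast
  qed
  have "\<forall>u\<in>U' - U. \<exists>j. j \<in> (C2 - C1) \<inter> {..<r*n} \<and> col A j = u" using new by blast
  then have "\<exists>g. \<forall>u\<in>U' - U. g u \<in> (C2 - C1) \<inter> {..<r*n} \<and> col A (g u) = u" by (rule bchoice)
  then obtain g where g0: "\<forall>u\<in>U' - U. g u \<in> (C2 - C1) \<inter> {..<r*n} \<and> col A (g u) = u" by blast
  then have g: "\<And>u. u \<in> U' - U \<Longrightarrow> g u \<in> (C2 - C1) \<inter> {..<r*n} \<and> col A (g u) = u" by blast
  define New where "New = g ` (U' - U)"
  have NewS: "New \<subseteq> (C2 - C1) \<inter> {..<r*n}" unfolding New_def using g by blast
  have "col A ` New = (\<lambda>u. col A (g u)) ` (U' - U)" unfolding New_def by (simp add: image_image)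
  also have "\<dots> = (\<lambda>u. u) ` (U' - U)" by (rule image_cong) (simp_all add: g)
  finally have imgNew: "col A ` New = U' - U" by simp
  have img: "col A ` (J \<union> New) = U'" using imgNew U' unfolding U_def by auto
  have finU': "finite U'" using U' finS finite_subset by blast
  have finJN: "finite (J \<union> New)" using JN NewS finite_subset by blast
  have a1: "card (J \<union> New) \<le> card J + card New" by (rule card_Un_le)
  have a2: "card New \<le> card (U' - U)" unfolding New_def by (rule card_image_le) (use finU' in auto)
  have a3: "card (U' - U) = card U' - card U" using U'(1) finU' by (simp add: card_Diff_subset finite_subset)
  have a4: "card U \<le> card U'" using card_mono[OF finU' U'(1)] .
  have le1: "card (J \<union> New) \<le> card U'" using a1 a2 a3 a4 cardU by linarith
  have le2: "card U' \<le> card (J \<union> New)" using img card_image_le[OF finJN, of "col A"] by simp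
  have inj: "inj_on (col A) (J \<union> New)"
  proof (rule eq_card_imp_inj_on[OF finJN])
    show "card (col A ` (J \<union> New)) = card (J \<union> New)" unfolding img using le1 le2 by linarith
  qed
  have "ind (J \<union> New)" unfolding ind_def using img inj U' JN NewS by auto
  moreover have "card (J \<union> New) = rkv C2" using le1 le2 U' by simp
  ultimately show ?thesis using NewS by blast
qed

lemma pluecker_iff:
  assumes "J \<subseteq> {..<r*n}" "card J = k"
  shows "pluecker A J \<noteq> 0 \<longleftrightarrow> ind J"
proof -
  define M where "M = submatrix A UNIV J"
  have D: "{a. a < dim_col A \<and> a \<in> J} = J" using assms dimA by auto
  have D2: "{j. j < r * n \<and> j \<in> J} = J" using assms by auto
  have Mcar: "M \<in> carrier_mat k k" unfolding M_def carrier_mat_def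
    by (simp add: dim_submatrix D2 dimA assms(2))
  have setM: "set (cols M) = col A ` J" unfolding M_def set_cols_sub D ..
  have distM: "distinct (cols M) \<longleftrightarrow> inj_on (col A) J" unfolding M_def distinct_cols_sub D ..
  have "pluecker A J \<noteq> 0 \<longleftrightarrow> rank M = k" unfolding pluecker_def M_def[symmetric]
    using det_rank_iff[OF Mcar] .
  also have "\<dots> \<longleftrightarrow> ind J"
  proof
    assume rk: "rank M = k"
    have "distinct (cols M)" using non_distinct_low_rank[OF Mcar] rk by auto
    moreover have "lin_indpt (set (cols M))" using full_rank_lin_indpt[OF Mcar rk] calculation by simp
    ultimately show "ind J" unfolding ind_def using assms setM distM by auto
  next
    assume "ind J"
    then have "distinct (cols M)" "lin_indpt (set (cols M))" using setM distM unfolding ind_def by auto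
    then show "rank M = k" using lin_indpt_full_rank[OF Mcar] by simp
  qed
  finally show ?thesis .
qed

end



context pm_setup
begin

lemma greedy:
  assumes "distinct p" "set p \<subseteq> {..<n}"
  shows "\<exists>J. ind J \<and> J \<subseteq> blk r (set p) \<and> card J = rkv (blk r (set p)) \<and>
     (\<forall>a\<in>set p. real (cnt r J a) = real (rkv (blk r (insert a (set (takeWhile (\<lambda>b. b \<noteq> a) p)))))
        - real (rkv (blk r (set (takeWhile (\<lambda>b. b \<noteq> a) p)))))"
  using assms
proof (induction p rule: rev_induct)
  case Nil
  have "blk r {} = {}" unfolding blk_def by simp
  then show ?case by (intro exI[of _ "{}"]) (simp add: ind_empty rkv_empty)
next
  case (snoc a p)
  have a: "a \<notin> set p" "distinct p" "set p \<subseteq> {..<n}" using snoc.prems by auto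
  obtain J where J: "ind J" "J \<subseteq> blk r (set p)" "card J = rkv (blk r (set p))"
    and Jw: "\<forall>b\<in>set p. real (cnt r J b) = real (rkv (blk r (insert b (set (takeWhile (\<lambda>c. c \<noteq> b) p)))))
        - real (rkv (blk r (set (takeWhile (\<lambda>c. c \<noteq> b) p))))"
    using snoc.IH[OF a(2,3)] by blast
  have setpa: "set (p @ [a]) = insert a (set p)" by simp
  have sub: "blk r (set p) \<subseteq> blk r (set (p @ [a]))" unfolding blk_def by auto
  obtain New where New: "New \<subseteq> (blk r (set (p @ [a])) - blk r (set p)) \<inter> {..<r*n}"
      "ind (J \<union> New)" "card (J \<union> New) = rkv (blk r (set (p @ [a])))"
    using ind_extend[OF J(1) J(2) J(3) sub] by blast
  have Na: "New \<subseteq> blk r {a}" using New(1) blk_insert[of r a "set p"] setpa by auto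
  have disj: "blk r {a} \<inter> blk r (set p) = {}" by (rule blk_disj[OF rpos a(1)])
  have JNd: "J \<inter> New = {}" using New(1) J(2) by blast
  have finJ: "finite J" using J(1) unfolding ind_def using finite_subset by blast
  have finN: "finite New" using New(1) finite_subset by blast
  have cardJN: "card (J \<union> New) = card J + card New" using finJ finN JNd by (rule card_Un_disjoint)
  show ?case
  proof (rule exI[of _ "J \<union> New"], intro conjI ballI)
    show "ind (J \<union> New)" by (rule New(2))
    show "J \<union> New \<subseteq> blk r (set (p @ [a]))" using J(2) sub New(1) by blast
    show "card (J \<union> New) = rkv (blk r (set (p @ [a])))" by (rule New(3))
    fix b assume b: "b \<in> set (p @ [a])"
    show "real (cnt r (J \<union> New) b) = real (rkv (blk r (insert b (set (takeWhile (\<lambda>c. c \<noteq> b) (p @ [a]))))))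
        - real (rkv (blk r (set (takeWhile (\<lambda>c. c \<noteq> b) (p @ [a])))))"
    proof (cases "b = a")
      case True
      have tw: "takeWhile (\<lambda>c. c \<noteq> a) (p @ [a]) = p"
        using a(1) by (subst takeWhile_append2) auto
      have "cnt r (J \<union> New) a = card ((J \<union> New) \<inter> blk r {a})" by (rule cnt_eq[OF rpos])
      also have "(J \<union> New) \<inter> blk r {a} = New" using Na J(2) disj by blast
      finally have "cnt r (J \<union> New) a = card New" .
      then have "real (cnt r (J \<union> New) a) = real (rkv (blk r (set (p @ [a])))) - real (rkv (blk r (set p)))"
        using cardJN New(3) J(3) by simp
      then show ?thesis using True tw setpa by simp
    next
      case False
      then have bp: "b \<in> set p" using b by simp
      have tw: "takeWhile (\<lambda>c. c \<noteq> b) (p @ [a]) = takeWhile (\<lambda>c. c \<noteq> b) p"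
        using bp by (simp add: takeWhile_append1)
      have d2: "blk r {b} \<inter> blk r {a} = {}" using blk_disj[OF rpos, of b "{a}"] False by simp
      have "(J \<union> New) \<inter> blk r {b} = J \<inter> blk r {b}" using Na d2 by blast
      then have "cnt r (J \<union> New) b = cnt r J b" using cnt_eq[OF rpos] by simp
      then show ?thesis using Jw bp tw by simp
    qed
  qed
qed

end

theorem theorem7p4:
  fixes r n k :: nat and A :: "complex mat"
  assumes "0 < r" and "0 < n" and "0 < k"
    and "A \<in> carrier_mat k (r * n)"
    and "vec_space.rank k A = k"
  shows "lattice_iso n (orbit_polytope r n k A) (base_polytope n (pm_rank r k A))"
proof -
  interpret pm: pm_setup r n k A using assms by unfold_locales auto
  define f where "f = (\<lambda>S. real (pm_rank r k A S))"
  define Q where "Q = base_polytope n (pm_rank r k A)"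
  have blkall: "blk r {..<n} = {..<r*n}" by (rule blk_lessThan[OF assms(1)])
  have rankk: "pm.rkv {..<r*n} = k" using pm.rank_A assms(5) by simp
  have pmall: "pm_rank r k A {..<n} = k" using pm.pm_rank_eq blkall rankk by simp
  have Qconv: "(\<lambda>j. \<Sum>p\<in>P. c p * p j) \<in> Q"
    if P: "finite P" "P \<subseteq> Q" "\<forall>p\<in>P. c p \<ge> 0" "sum c P = 1" for P c
  proof -
    have Pp: "\<And>p. p \<in> P \<Longrightarrow> (\<forall>j. n \<le> j \<longrightarrow> p j = 0) \<and> (\<forall>j<n. 0 \<le> p j) \<and>
      (\<forall>U. U \<subseteq> {..<n} \<longrightarrow> (\<Sum>j\<in>U. p j) \<le> real (pm_rank r k A U)) \<and>
      (\<Sum>j<n. p j) = real (pm_rank r k A {..<n})" using P(2) unfolding Q_def base_polytope_def by blast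
    have swap: "(\<Sum>j\<in>U. \<Sum>p\<in>P. c p * p j) = (\<Sum>p\<in>P. c p * (\<Sum>j\<in>U. p j))" for U
      by (simp add: sum.swap[of _ U] sum_distrib_left)
    show ?thesis
      unfolding Q_def base_polytope_def
    proof (intro CollectI conjI allI impI)
      fix j assume "n \<le> j" then show "(\<Sum>p\<in>P. c p * p j) = 0" using Pp by simp
    next
      fix j assume "j < n" then show "0 \<le> (\<Sum>p\<in>P. c p * p j)" using Pp P(3) by (intro sum_nonneg) simp
    next
      fix U assume U: "U \<subseteq> {..<n}"
      have "(\<Sum>p\<in>P. c p * (\<Sum>j\<in>U. p j)) \<le> (\<Sum>p\<in>P. c p * real (pm_rank r k A U))"
        using Pp U P(3) by (intro sum_mono mult_left_mono) auto
      also have "\<dots> = real (pm_rank r k A U)" using P(4) by (simp add: sum_distrib_right[symmetric])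
      finally show "(\<Sum>j\<in>U. \<Sum>p\<in>P. c p * p j) \<le> real (pm_rank r k A U)" using swap by simp
    next
      have "(\<Sum>p\<in>P. c p * (\<Sum>j<n. p j)) = (\<Sum>p\<in>P. c p * real (pm_rank r k A {..<n}))"
        using Pp by (intro sum.cong) auto
      also have "\<dots> = real (pm_rank r k A {..<n})" using P(4) by (simp add: sum_distrib_right[symmetric])
      finally show "(\<Sum>j<n. \<Sum>p\<in>P. c p * p j) = real (pm_rank r k A {..<n})" using swap by simp
    qed
  qed
  have orbQ: "orbit_exponents r n k A \<subseteq> Q"
  proof
    fix x assume "x \<in> orbit_exponents r n k A"
    then obtain J where J: "x = torus_weight r n J" "J \<subseteq> {..<r*n}" "card J = k" "pluecker A J \<noteq> 0"
      unfolding orbit_exponents_def by blast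
    have ind: "pm.ind J" using pm.pluecker_iff J by blast
    have tw: "\<And>j. j < n \<Longrightarrow> x j = real (cnt r J j)" using J(1) by (simp add: torus_weight_def cnt_def)
    have sU: "sum x U = real (card (J \<inter> blk r U))" if U: "U \<subseteq> {..<n}" for U
    proof -
      have finU: "finite U" using U finite_subset by blast
      have "sum x U = (\<Sum>j\<in>U. real (cnt r J j))" using U tw by (intro sum.cong) auto
      also have "\<dots> = real (card (J \<inter> blk r U))" using card_blk_sum[OF assms(1) finU, of J] by simp
      finally show ?thesis .
    qed
    show "x \<in> Q"
      unfolding Q_def base_polytope_def
    proof (intro CollectI conjI allI impI)
      fix j assume "n \<le> j" then show "x j = 0" using J(1) by (simp add: torus_weight_def)
    next
      fix j assume "j < n" then show "0 \<le> x j" using tw by simp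
    next
      fix U assume U: "U \<subseteq> {..<n}"
      have "card (J \<inter> blk r U) \<le> pm.rkv (blk r U)"
        using pm.ind_subset[OF ind, of "J \<inter> blk r U"] by (intro pm.ind_card_le) auto
      then show "sum x U \<le> real (pm_rank r k A U)" using sU[OF U] pm.pm_rank_eq by simp
    next
      have "J \<inter> blk r {..<n} = J" using J(2) blkall by blast
      then show "(\<Sum>j<n. x j) = real (pm_rank r k A {..<n})" using sU[of "{..<n}"] J(3) pmall by simp
    qed
  qed
  have PQ1: "orbit_polytope r n k A \<subseteq> Q"
  proof
    fix x assume "x \<in> orbit_polytope r n k A"
    then obtain P c where "finite P" "P \<subseteq> orbit_exponents r n k A" "\<forall>p\<in>P. c p \<ge> 0" "sum c P = 1"
      "x = (\<lambda>j. \<Sum>p\<in>P. c p * p j)" unfolding orbit_polytope_def conv_hull_def by blast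
    then show "x \<in> Q" using Qconv[of P c] orbQ by auto
  qed
  have GVsub: "GV {..<n} f \<subseteq> orbit_exponents r n k A"
  proof
    fix q assume "q \<in> GV {..<n} f"
    then obtain p where p: "q = gv f p" "distinct p" "set p = {..<n}" unfolding GV_def by blast
    obtain J where J: "pm.ind J" "J \<subseteq> blk r (set p)" "card J = pm.rkv (blk r (set p))"
      and Jw: "\<forall>a\<in>set p. real (cnt r J a) = real (pm.rkv (blk r (insert a (set (takeWhile (\<lambda>b. b \<noteq> a) p)))))
        - real (pm.rkv (blk r (set (takeWhile (\<lambda>b. b \<noteq> a) p))))"
      using pm.greedy[OF p(2)] p(3) by auto
    have J1: "J \<subseteq> {..<r*n}" using J(2) p(3) blkall by simp
    have J2: "card J = k" using J(3) p(3) blkall rankk by simp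
    have J3: "pluecker A J \<noteq> 0" using pm.pluecker_iff[OF J1 J2] J(1) by simp
    have "q = torus_weight r n J"
    proof
      fix a
      show "q a = torus_weight r n J a"
      proof (cases "a < n")
        case True
        then have "a \<in> set p" using p(3) by simp
        then show ?thesis using Jw True unfolding p(1) gv_def f_def torus_weight_def cnt_def
          by (simp add: pm.pm_rank_eq)
      next
        case False
        then have "a \<notin> set p" using p(3) by simp
        then show ?thesis using False unfolding p(1) gv_def torus_weight_def by simp
      qed
    qed
    then show "q \<in> orbit_exponents r n k A" unfolding orbit_exponents_def using J1 J2 J3 by blast
  qed
  have f0: "f {} = 0"
  proof -
    have "blk r {} = {}" unfolding blk_def by simp
    then show ?thesis unfolding f_def using pm.pm_rank_eq pm.rkv_empty by simp
  qed
  have PQ2: "Q \<subseteq> orbit_polytope r n k A"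
  proof
    fix x assume x: "x \<in> Q"
    have "inB {..<n} f x" using x unfolding inB_def Q_def base_polytope_def f_def by auto
    then have "x \<in> conv_hull 0 (GV {..<n} f)" using abs_main[of "{..<n}" f x] f0 by simp
    then show "x \<in> orbit_polytope r n k A" unfolding orbit_polytope_def using cvx_mono[OF GVsub] by blast
  qed
  have PQ: "orbit_polytope r n k A = Q" using PQ1 PQ2 by blast
  define L :: "nat \<Rightarrow> nat \<Rightarrow> int" where "L = (\<lambda>i j. if i = j then 1 else 0)"
  have LL: "(\<Sum>j<n. L i j * L j l) = (if i = l then 1 else 0)" if "i < n" for i l
    using that unfolding L_def by (simp add: if_distrib sum.delta cong: if_cong)
  have img: "(\<lambda>x. \<lambda>i. if i < n then (\<Sum>j<n. of_int (L i j) * x j) + of_int ((\<lambda>_. 0::int) i) else 0) ` Q = Q"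
  proof -
    have "(\<lambda>i. if i < n then (\<Sum>j<n. of_int (L i j) * x j) + of_int ((\<lambda>_. 0::int) i) else 0) = x"
      if "x \<in> Q" for x :: "nat \<Rightarrow> real"
    proof
      fix i
      have "\<forall>j. n \<le> j \<longrightarrow> x j = 0" using that unfolding Q_def base_polytope_def by blast
      have "(\<Sum>j<n. of_int (L i j) * x j) = (\<Sum>j<n. if i = j then x i else 0)"
        by (intro sum.cong) (auto simp: L_def)
      also have "\<dots> = (if i < n then x i else 0)" by (simp add: sum.delta)
      finally show "(if i < n then (\<Sum>j<n. of_int (L i j) * x j) + of_int ((\<lambda>_. 0::int) i) else 0) = x i"
        using \<open>\<forall>j. n \<le> j \<longrightarrow> x j = 0\<close> by auto
    qed
    then show ?thesis by (auto simp: image_iff)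
  qed
  show ?thesis
    unfolding lattice_iso_def PQ Q_def[symmetric]
    by (rule exI[of _ L], rule exI[of _ L], rule exI[of _ "\<lambda>_. 0"]) (use LL img in auto)
qed


end
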